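(* Let $L,K\ge1$, let $\mathbf{M}=(m_{l,k})\in\mathbb{R}^{L\times K}$ have all entries strictly positive, and equip $\mathbb{R}^{L\times K}$ with the inner product $\langle\mathbf{Y},\mathbf{Z}\rangle_{\mathbf{M}}=\sum_{l=1}^L\sum_{k=1}^K m_{l,k}y_{l,k}z_{l,k}$ and its norm $\|\cdot\|_{\mathbf{M}}$. Let $\mathcal{H}$ be the subspace of $L\times K$ Hankel matrices and, for an integer $r\ge0$, let $\mathcal{M}_r$ be the set of $L\times K$ matrices of rank at most $r$. Let $\Pi_{\mathcal{H}}$ be the $\|\cdot\|_{\mathbf{M}}$-orthogonal projection onto $\mathcal{H}$ and $\Pi_{\mathcal{M}_r}$ a map assigning to each matrix a $\|\cdot\|_{\mathbf{M}}$-closest point of $\mathcal{M}_r$. For $\mathbf{X}\in\mathbb{R}^{L\times K}$ put $\mathbf{Y}_0=\mathbf{X}$, $\mathbf{Y}_{k+1}=\Pi_{\mathcal{H}}\Pi_{\mathcal{M}_r}\mathbf{Y}_k$. Then $\|\mathbf{Y}_k-\Pi_{\mathcal{M}_r}\mathbf{Y}_k\|_{\mathbf{M}}\to0$, $\|\Pi_{\mathcal{M}_r}\mathbf{Y}_k-\mathbf{Y}_{k+1}\|_{\mathbf{M}}\to0$, and some subsequence of $(\mathbf{Y}_k)$ converges to a Hankel matrix of rank at most $r$.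
   Context: A matrix $(y_{i,j})\in\mathbb{R}^{L\times K}$ is Hankel if $y_{i,j}$ depends only on $i+j$. *)

theory Defs
  imports "HOL-Analysis.Analysis"
begin

text \<open>Matrices in R^(L x K) are rendered as real^'k^'l, with row index type 'l and
 column index type 'k (finite, linearly ordered). Row/column positions are counted from 0.\<close>

definition idx :: "'a::{finite,linorder} \<Rightarrow> nat" where
  "idx i = card {j. j < i}"

definition hankel :: "(real^'k::{finite,linorder}^'l::{finite,linorder}) set" where
  "hankel = {Y. \<forall>i j i' j'. idx i + idx j = idx i' + idx j' \<longrightarrow> Y$i$j = Y$i'$j'}"

definition low_rank :: "nat \<Rightarrow> (real^'k^'l) set" where
  "low_rank r = {Y. rank Y \<le> r}"

definition Minner :: "real^'k^'l \<Rightarrow> real^'k^'l \<Rightarrow> real^'k^'l \<Rightarrow> real" where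
  "Minner M Y Z = (\<Sum>i\<in>UNIV. \<Sum>j\<in>UNIV. M$i$j * Y$i$j * Z$i$j)"

definition Mnorm :: "real^'k^'l \<Rightarrow> real^'k^'l \<Rightarrow> real" where
  "Mnorm M Y = sqrt (Minner M Y Y)"

definition is_orth_proj :: "real^'k^'l \<Rightarrow> (real^'k^'l) set \<Rightarrow> (real^'k^'l \<Rightarrow> real^'k^'l) \<Rightarrow> bool" where
  "is_orth_proj M S P \<longleftrightarrow> (\<forall>Y. P Y \<in> S \<and> (\<forall>Z\<in>S. Minner M (Y - P Y) Z = 0))"

definition is_nearest_map :: "real^'k^'l \<Rightarrow> (real^'k^'l) set \<Rightarrow> (real^'k^'l \<Rightarrow> real^'k^'l) \<Rightarrow> bool" where
  "is_nearest_map M S P \<longleftrightarrow> (\<forall>Y. P Y \<in> S \<and> (\<forall>Z\<in>S. Mnorm M (Y - P Y) \<le> Mnorm M (Y - Z)))"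

end

theory Submission imports Defs begin
definition WW :: "real^'k^'l \<Rightarrow> real^'k^'l \<Rightarrow> real^'k^'l" where
  "WW M A = (\<chi> i j. sqrt (M$i$j) * A$i$j)"
definition WI :: "real^'k^'l \<Rightarrow> real^'k^'l \<Rightarrow> real^'k^'l" where
  "WI M A = (\<chi> i j. A$i$j / sqrt (M$i$j))"

lemma Minner_W: assumes "\<forall>i j. M$i$j > 0" shows "Minner M A B = inner (WW M A) (WW M B)"
  using assms unfolding Minner_def WW_def inner_vec_def
  by (auto intro!: sum.cong simp: inner_real_def less_imp_le algebra_simps)

lemma Mnorm_W: assumes "\<forall>i j. M$i$j > 0" shows "Mnorm M A = norm (WW M A)"
  unfolding Mnorm_def Minner_W[OF assms] by (simp add: norm_eq_sqrt_inner)

lemma W_diff: "WW M (A - B) = WW M A - WW M B"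
  unfolding WW_def by (simp add: vec_eq_iff algebra_simps)
lemma W_scale: "WW M (c *\<^sub>R A) = c *\<^sub>R WW M A"
  unfolding WW_def by (simp add: vec_eq_iff algebra_simps)
lemma WI_W: assumes "\<forall>i j. M$i$j > 0" shows "WI M (WW M A) = A"
  using assms unfolding WW_def WI_def by (simp add: vec_eq_iff) (metis less_irrefl)
lemma W_WI: assumes "\<forall>i j. M$i$j > 0" shows "WW M (WI M A) = A"
  using assms unfolding WW_def WI_def by (simp add: vec_eq_iff) (metis less_irrefl)

lemma rank_scale: "rank (c *\<^sub>R (A::real^'k^'l)) \<le> rank A"
proof -
  have "c *\<^sub>R A = (c *\<^sub>R mat 1) ** A"
    by (metis matrix_mul_lid scalar_matrix_assoc)
  then show ?thesis by (metis rank_mul_le_right)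
qed

lemma cone_orth:
  fixes y z :: "'a::real_inner"
  assumes "\<forall>c. norm (y - z) \<le> norm (y - c *\<^sub>R z)"
  shows "inner (y - z) z = 0"
proof (cases "z = 0")
  case True then show ?thesis by simp
next
  case False
  define a where "a = inner z z"
  define b where "b = inner y z"
  have a: "a > 0" using False by (simp add: a_def)
  have sq: "\<And>c. (norm (y - c *\<^sub>R z))^2 = inner y y - 2*c*b + c^2 * a"
    unfolding power2_norm_eq_inner by (simp add: inner_diff_left inner_diff_right a_def b_def inner_commute power2_eq_square algebra_simps)
  have "(norm (y - z))^2 \<le> (norm (y - (b/a) *\<^sub>R z))^2"
    using assms by (meson norm_ge_zero power_mono)
  then have "inner y y - 2*b + a \<le> inner y y - 2*(b/a)*b + (b/a)^2 * a"
    using sq[of 1] sq[of "b/a"] by simp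
  then have "a*a - 2*a*b + b*b \<le> 0" using a
    by (simp add: field_simps power2_eq_square)
  then have "(a - b)^2 \<le> 0" by (simp add: power2_eq_square algebra_simps)
  then have "a = b" by simp
  then show ?thesis unfolding a_def b_def by (simp add: inner_diff_left)
qed

theorem mainTheorem3:
  fixes M X :: "((real, 'k::{finite,linorder}) vec, 'l::{finite,linorder}) vec"
    and r :: nat
    and PH PM :: "((real, 'k) vec, 'l) vec \<Rightarrow> ((real, 'k) vec, 'l) vec"
    and Y :: "nat \<Rightarrow> ((real, 'k) vec, 'l) vec"
  assumes Mpos: "\<forall>i j. M$i$j > 0"
    and PH: "is_orth_proj M hankel PH"
    and PM: "is_nearest_map M (low_rank r) PM"
    and Y0: "Y 0 = X"
    and YS: "\<forall>n. Y (Suc n) = PH (PM (Y n))"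
  shows "((\<lambda>n. Mnorm M (Y n - PM (Y n))) \<longlonglongrightarrow> 0) \<and>
         ((\<lambda>n. Mnorm M (PM (Y n) - Y (Suc n))) \<longlonglongrightarrow> 0) \<and>
         (\<exists>s Z. strict_mono s \<and> Z \<in> hankel \<and> Z \<in> low_rank r \<and>
               (\<lambda>n. Mnorm M (Y (s n) - Z)) \<longlonglongrightarrow> 0)"
proof -
  let ?W = "WW M"
  define y where "y n = ?W (Y n)" for n
  define z where "z n = ?W (PM (Y n))" for n
  define d where "d n = norm (y n - z n)" for n
  define e where "e n = norm (z n - y (Suc n))" for n
  have PHin: "\<And>A. PH A \<in> hankel" and PHo: "\<And>A Z. Z \<in> hankel \<Longrightarrow> inner (?W A - ?W (PH A)) (?W Z) = 0"
    using PH unfolding is_orth_proj_def by (auto simp: Minner_W[OF Mpos] W_diff)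
  have PMin: "\<And>A. PM A \<in> low_rank r" and PMn: "\<And>A Z. Z \<in> low_rank r \<Longrightarrow> norm (?W A - ?W (PM A)) \<le> norm (?W A - ?W Z)"
    using PM unfolding is_nearest_map_def by (auto simp: Mnorm_W[OF Mpos] W_diff)
  have F1: "Y (Suc n) \<in> hankel" for n using YS PHin by simp
  have F2: "Z \<in> hankel \<Longrightarrow> inner (z n - y (Suc n)) (?W Z) = 0" for n Z
    using PHo[of Z "PM (Y n)"] YS unfolding z_def y_def by simp
  have F3: "Z \<in> low_rank r \<Longrightarrow> norm (y n - z n) \<le> norm (y n - ?W Z)" for n Z
    using PMn unfolding z_def y_def by simp
  have F4: "inner (y n - z n) (z n) = 0" for n
  proof -
    have "\<forall>c. norm (y n - z n) \<le> norm (y n - c *\<^sub>R z n)"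
    proof
      fix c
      have "c *\<^sub>R PM (Y n) \<in> low_rank r" using PMin[of "Y n"] rank_scale[of c "PM (Y n)"]
        unfolding low_rank_def by auto
      from F3[OF this] show "norm (y n - z n) \<le> norm (y n - c *\<^sub>R z n)"
        by (simp add: W_scale z_def)
    qed
    then show ?thesis by (rule cone_orth)
  qed
  have Hn: "n \<ge> 1 \<Longrightarrow> Y n \<in> hankel" for n using F1[of "n - 1"] by simp
  have Pyth: "inner a b = 0 \<Longrightarrow> (norm (a + b))^2 = (norm a)^2 + (norm b)^2" for a b :: "((real, 'k) vec, 'l) vec"
    by (simp add: power2_norm_eq_inner inner_add_left inner_add_right inner_commute)
  have L1: "(d n)^2 = (e n)^2 + (norm (y (Suc n) - y n))^2" if "n \<ge> 1" for n
  proof -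
    have "inner (z n - y (Suc n)) (y (Suc n) - y n) = 0"
      using F2[OF F1[of n]] F2[OF Hn[OF that]] unfolding y_def by (simp add: inner_diff_right)
    from Pyth[OF this] have "(norm (z n - y n))^2 = (e n)^2 + (norm (y (Suc n) - y n))^2"
      unfolding e_def by simp
    then show ?thesis unfolding d_def by (simp add: norm_minus_commute)
  qed
  have L1': "e n \<le> d n" if "n \<ge> 1" for n
  proof -
    have "(e n)^2 \<le> (d n)^2" using L1[OF that] by simp
    then show ?thesis by (rule power2_le_imp_le) (simp add: d_def)
  qed
  have L2: "d (Suc n) \<le> e n" for n
    using F3[OF PMin[of "Y n"], of "Suc n"] unfolding d_def e_def z_def by (simp add: norm_minus_commute)
  have L3: "norm (y (Suc n)) \<le> norm (y n)" for n
  proof -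
    have a: "(norm (z n))^2 = (e n)^2 + (norm (y (Suc n)))^2"
      using Pyth[of "z n - y (Suc n)" "y (Suc n)"] F2[OF F1[of n]] unfolding e_def y_def by simp
    have b: "(norm (y n))^2 = (d n)^2 + (norm (z n))^2"
      using Pyth[OF F4[of n]] unfolding d_def by simp
    have "(norm (y (Suc n)))^2 \<le> (norm (y n))^2" using a b
      by (simp add: add.commute add_increasing2)
    then show ?thesis by (rule power2_le_imp_le) simp
  qed
  define B where "B = norm (y 0)"
  have Bd: "norm (y n) \<le> B" for n
    unfolding B_def
  proof (induction n)
    case (Suc n) then show ?case using L3[of n] by linarith
  qed simp
  have L4: "(d n)^2 \<le> B * norm (y n - y (Suc n))" if "n \<ge> 1" for n
  proof -
    have "(d n)^2 = inner (y n - z n) (y n - z n)" unfolding d_def by (simp add: power2_norm_eq_inner)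
    also have "\<dots> = inner (y n - z n) (y n)" using F4[of n] by (simp add: inner_diff_right)
    also have "\<dots> = inner (y n - y (Suc n)) (y n)"
      using F2[OF Hn[OF that]] unfolding y_def by (simp add: inner_diff_left)
    also have "\<dots> \<le> norm (y n - y (Suc n)) * norm (y n)" by (rule norm_cauchy_schwarz)
    also have "\<dots> \<le> norm (y n - y (Suc n)) * B" using Bd by (simp add: mult_left_mono)
    finally show ?thesis by (simp add: mult.commute)
  qed
  define D where "D n = (d (Suc n))^2" for n
  have Ddec: "decseq D" unfolding decseq_Suc_iff D_def
  proof
    fix n
    have "d (Suc (Suc n)) \<le> d (Suc n)" using L2[of "Suc n"] L1'[of "Suc n"] by simp
    then show "(d (Suc (Suc n)))^2 \<le> (d (Suc n))^2" by (rule power_mono) (simp add: d_def)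
  qed
  obtain LD where LD: "D \<longlonglongrightarrow> LD"
    using decseq_convergent[OF Ddec, of 0] unfolding D_def by auto
  have "(\<lambda>n. D n - D (Suc n)) \<longlonglongrightarrow> LD - LD"
    using LD LIMSEQ_Suc[OF LD] by (intro tendsto_diff)
  then have Ddiff: "(\<lambda>n. D n - D (Suc n)) \<longlonglongrightarrow> 0" by simp
  have "(\<lambda>n. (norm (y (Suc (Suc n)) - y (Suc n)))^2) \<longlonglongrightarrow> 0"
  proof (rule tendsto_sandwich[OF _ _ tendsto_const Ddiff])
    show "\<forall>\<^sub>F n in sequentially. 0 \<le> (norm (y (Suc (Suc n)) - y (Suc n)))^2" by simp
    show "\<forall>\<^sub>F n in sequentially. (norm (y (Suc (Suc n)) - y (Suc n)))^2 \<le> D n - D (Suc n)"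
    proof (intro always_eventually allI)
      fix n
      have "(d (Suc n))^2 = (e (Suc n))^2 + (norm (y (Suc (Suc n)) - y (Suc n)))^2" using L1[of "Suc n"] by simp
      moreover have "(d (Suc (Suc n)))^2 \<le> (e (Suc n))^2" using L2[of "Suc n"]
        by (simp add: d_def power_mono)
      ultimately show "(norm (y (Suc (Suc n)) - y (Suc n)))^2 \<le> D n - D (Suc n)" unfolding D_def by simp
    qed
  qed
  then have "(\<lambda>n. sqrt ((norm (y (Suc (Suc n)) - y (Suc n)))^2)) \<longlonglongrightarrow> sqrt 0"
    by (rule tendsto_real_sqrt)
  then have "(\<lambda>n. norm (y (Suc (Suc n)) - y (Suc n))) \<longlonglongrightarrow> 0" by simp
  then have "(\<lambda>n. norm (y (Suc n) - y n)) \<longlonglongrightarrow> 0"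
    using filterlim_sequentially_Suc[where f="\<lambda>n. norm (y (Suc n) - y n)" and F="nhds 0"] by simp
  then have dy: "(\<lambda>n. norm (y n - y (Suc n))) \<longlonglongrightarrow> 0" by (simp add: norm_minus_commute)
  have "(\<lambda>n. (d (Suc n))^2) \<longlonglongrightarrow> 0"
  proof (rule tendsto_sandwich[OF _ _ tendsto_const])
    show "\<forall>\<^sub>F n in sequentially. 0 \<le> (d (Suc n))^2" by simp
    show "\<forall>\<^sub>F n in sequentially. (d (Suc n))^2 \<le> B * norm (y (Suc n) - y (Suc (Suc n)))"
      using L4 by simp
    show "(\<lambda>n. B * norm (y (Suc n) - y (Suc (Suc n)))) \<longlonglongrightarrow> 0"
      using tendsto_mult_right_zero[OF dy[THEN LIMSEQ_Suc], of B] by simp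
  qed
  then have "(\<lambda>n. sqrt ((d (Suc n))^2)) \<longlonglongrightarrow> sqrt 0" by (rule tendsto_real_sqrt)
  then have "(\<lambda>n. d (Suc n)) \<longlonglongrightarrow> 0" by (simp add: d_def)
  then have dlim: "d \<longlonglongrightarrow> 0" using filterlim_sequentially_Suc[where f=d and F="nhds 0"] by simp
  have "(\<lambda>n. e (Suc n)) \<longlonglongrightarrow> 0"
  proof (rule tendsto_sandwich[OF _ _ tendsto_const dlim[THEN LIMSEQ_Suc]])
    show "\<forall>\<^sub>F n in sequentially. 0 \<le> e (Suc n)" by (simp add: e_def)
    show "\<forall>\<^sub>F n in sequentially. e (Suc n) \<le> d (Suc n)" using L1' by simp
  qed
  then have elim: "e \<longlonglongrightarrow> 0" using filterlim_sequentially_Suc[where f=e and F="nhds 0"] by simp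
  have G1: "(\<lambda>n. Mnorm M (Y n - PM (Y n))) = d"
    by (simp add: fun_eq_iff Mnorm_W[OF Mpos] W_diff d_def y_def z_def)
  have G2: "(\<lambda>n. Mnorm M (PM (Y n) - Y (Suc n))) = e"
    by (simp add: fun_eq_iff Mnorm_W[OF Mpos] W_diff e_def y_def z_def)
  have "bounded (range y)" using Bd by (auto simp: bounded_iff)
  then obtain l s where s: "strict_mono s" and ls: "(y \<circ> s) \<longlonglongrightarrow> l"
    using bounded_imp_convergent_subsequence by blast
  define Zs where "Zs = WI M l"
  have WZs: "?W Zs = l" unfolding Zs_def by (rule W_WI[OF Mpos])
  have G3: "(\<lambda>n. Mnorm M (Y (s n) - Zs)) \<longlonglongrightarrow> 0"
  proof -
    have "(\<lambda>n. y (s n) - l) \<longlonglongrightarrow> 0" using ls by (simp add: LIM_zero o_def)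
    then have "(\<lambda>n. norm (y (s n) - l)) \<longlonglongrightarrow> 0" by (rule tendsto_norm_zero)
    then show ?thesis by (simp add: Mnorm_W[OF Mpos] W_diff WZs y_def)
  qed
  have ds: "(d \<circ> s) \<longlonglongrightarrow> 0" using LIMSEQ_subseq_LIMSEQ[OF dlim s] .
  have Zlow: "Zs \<in> low_rank r"
  proof -
    define p where "p = ?W (PM Zs)"
    have le: "norm (l - p) \<le> norm (l - y (s n)) + d (s n)" for n
    proof -
      have "norm (l - p) \<le> norm (l - z (s n))"
        using PMn[OF PMin[of "Y (s n)"], of Zs] unfolding p_def z_def WZs .
      also have "\<dots> \<le> norm (l - y (s n)) + norm (y (s n) - z (s n))"
        by (rule norm_diff_triangle_le[of _ "y (s n)"]) simp_all
      finally show ?thesis unfolding d_def .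
    qed
    have "(\<lambda>n. l - y (s n)) \<longlonglongrightarrow> l - l" using ls by (intro tendsto_diff tendsto_const) (simp add: o_def)
    then have "(\<lambda>n. norm (l - y (s n))) \<longlonglongrightarrow> 0" using tendsto_norm_zero by force
    then have "(\<lambda>n. norm (l - y (s n)) + d (s n)) \<longlonglongrightarrow> 0 + 0"
      using ds by (intro tendsto_add) (simp_all add: o_def)
    then have "norm (l - p) \<le> 0"
      using le by (intro tendsto_lowerbound[where F=sequentially]) (auto intro: always_eventually)
    then have "?W Zs = ?W (PM Zs)" using WZs p_def by simp
    then have "Zs = PM Zs" by (metis WI_W[OF Mpos])
    then show ?thesis using PMin by metis
  qed
  have Zhank: "Zs \<in> hankel"
  proof -
    define q where "q = ?W (PH Zs)"
    have o1: "inner (l - q) q = 0" using PHo[OF PHin[of Zs], of Zs] unfolding q_def WZs .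
    have ev: "\<forall>\<^sub>F n in sequentially. inner (l - q) (y (s n)) = 0"
    proof (rule eventually_sequentiallyI[of 1])
      fix n :: nat assume "1 \<le> n"
      then have "s n \<ge> 1" using seq_suble[OF s, of n] by simp
      then show "inner (l - q) (y (s n)) = 0" using PHo[OF Hn, of "s n" Zs]
        unfolding q_def WZs y_def by simp
    qed
    have "(\<lambda>n. inner (l - q) (y (s n))) \<longlonglongrightarrow> inner (l - q) l"
      using ls by (intro tendsto_inner tendsto_const) (simp add: o_def)
    moreover have "(\<lambda>n. inner (l - q) (y (s n))) \<longlonglongrightarrow> 0"
      using ev by (rule tendsto_eventually)
    ultimately have "inner (l - q) l = 0" using LIMSEQ_unique by blast
    then have "inner (l - q) (l - q) = 0" using o1 by (simp add: inner_diff_right)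
    then have "?W Zs = ?W (PH Zs)" using WZs q_def by simp
    then have "Zs = PH Zs" by (metis WI_W[OF Mpos])
    then show ?thesis using PHin by metis
  qed
  have "\<exists>s Z. strict_mono s \<and> Z \<in> hankel \<and> Z \<in> low_rank r \<and>
               (\<lambda>n. Mnorm M (Y (s n) - Z)) \<longlonglongrightarrow> 0" using s Zhank Zlow G3 by blast
  then show ?thesis unfolding G1 G2 using dlim elim by blast
qed

end
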